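(* For every $\xi\in\Xi$, the hybrid system $\mathcal H_\xi$ renders $\mathcal A_s$ strongly forward invariant for the sub-state $\tau$, and $\mathcal A:=\mathcal A_s\times\mathbb Z_{\ge0}$ strongly forward invariant for the state $x$: every complete solution $x=(\tau,\lambda)$ of $\mathcal H_\xi$ with $\tau(0,0)\in\mathcal A_s$ satisfies $\tau(t,k)\in\mathcal A_s$ (equivalently $x(t,k)\in\mathcal A$) for all $(t,k)\in\operatorname{dom}(x)$.
   Context: $\mathcal G=(\mathcal V,\mathcal E)$ is a simple digraph on $\mathcal V=\{1,\dots,N\}$; $(i,j)\in\mathcal E$ means $j$ is an out-neighbor of $i$; $\mathcal E_i^-$ is the set of out-edges of $i$. Fix $T>0$, $r\in(0,1)^N$. A subgraph $(\mathcal V,\mathcal E')$, $\mathcal E'\subseteq\mathcal E$, is feasible if for every $i$ either $\mathcal E_i^-\subseteq\mathcal E'$ or $\mathcal E_i^-\cap\mathcal E'=\varnothing$. $\Xi$ is the set of infinite sequences $\xi=\phi_1\phi_2\cdots$ of feasible subgraphs, $\phi_\lambda=(\mathcal V,\mathcal E_\lambda)$. Hybrid system $\mathcal H_\xi$: state $x=(\tau,\lambda)\in\mathbb R^N_{\ge0}\times\mathbb Z_{\ge0}$; flow set $C=[0,1]^N\times\mathbb Z_{\ge0}$ with $\dot\tau=\frac1T\mathbf 1_N$, $\dot\lambda=0$; jump set $D=\{\tau\in[0,1]^N:\max_i\tau_i=1\}\times\mathbb Z_{\ge0}$ with $x^+\in G_{\lambda+1}(\tau)\times\{\lambda+1\}$,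 where $G_\lambda$ is the outer-semicontinuous hull of $G_\lambda^0(\tau)=\{g\in\mathbb R^N:g_i=0,\ g_j\in\mathcal R_{j,\lambda}(\tau)\ \forall j\ne i\}$, $i$ an agent with $\tau_i=1$, and $\mathcal R_{j,\lambda}(\tau)=\{0\}$, $\{0,1\}$, $\{1\}$ if $(i,j)\in\mathcal E_\lambda$ and $\tau_j<r_j$, $=r_j$, $>r_j$ respectively, and $\{\tau_j\}$ if $(i,j)\notin\mathcal E_\lambda$. Solutions are hybrid arcs on hybrid time domains that flow in $C$ according to the flow map and jump from $D$ via the jump map; complete means the domain is unbounded. $\mathcal A_s:=\{\mu\mathbf 1_N:\mu\in[0,1]\}\cup\{0,1\}^N$. *)

theory Defs
  imports "HOL-Analysis.Analysis"
begin

text \<open>Agents are the elements of a finite type 'n (playing the role of {1..N});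
  states tau are vectors in real^'n, edges are pairs (i,j) meaning j is an
  out-neighbour of i.\<close>

definition simple_digraph :: "('n \<times> 'n) set \<Rightarrow> bool" where
  "simple_digraph E \<longleftrightarrow> (\<forall>i. (i, i) \<notin> E)"

definition out_edges :: "('n \<times> 'n) set \<Rightarrow> 'n \<Rightarrow> ('n \<times> 'n) set" where
  "out_edges E i = {e \<in> E. fst e = i}"

definition feasible_subgraph :: "('n \<times> 'n) set \<Rightarrow> ('n \<times> 'n) set \<Rightarrow> bool" where
  "feasible_subgraph E E' \<longleftrightarrow> E' \<subseteq> E \<and>
     (\<forall>i. out_edges E i \<subseteq> E' \<or> out_edges E i \<inter> E' = {})"

text \<open>A sequence xi = phi_1 phi_2 ... of feasible subgraphs (entry 0 is unused).\<close>
definition feasible_seq :: "('n \<times> 'n) set \<Rightarrow> (nat \<Rightarrow> ('n \<times> 'n) set) \<Rightarrow> bool" where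
  "feasible_seq E \<xi> \<longleftrightarrow> (\<forall>k\<ge>1. feasible_subgraph E (\<xi> k))"

definition unit_box :: "(real^'n) set" where
  "unit_box = {\<tau>. \<forall>i. 0 \<le> \<tau> $ i \<and> \<tau> $ i \<le> 1}"

definition flow_set :: "((real^'n) \<times> nat) set" where
  "flow_set = unit_box \<times> UNIV"

definition jump_set :: "((real^'n) \<times> nat) set" where
  "jump_set = {\<tau>. \<tau> \<in> unit_box \<and> (\<exists>i. \<tau> $ i = 1)} \<times> UNIV"

definition flow_map :: "real \<Rightarrow> real^'n \<Rightarrow> real^'n" where
  "flow_map T \<tau> = (\<chi> i. 1 / T)"

definition reset_set :: "('n \<times> 'n) set \<Rightarrow> real^'n \<Rightarrow> 'n \<Rightarrow> 'n \<Rightarrow> real^'n \<Rightarrow> real set" where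
  "reset_set E' r i j \<tau> =
     (if (i, j) \<in> E' then
        (if \<tau> $ j < r $ j then {0} else if \<tau> $ j = r $ j then {0, 1} else {1})
      else {\<tau> $ j})"

definition G0 :: "('n \<times> 'n) set \<Rightarrow> real^'n \<Rightarrow> real^'n \<Rightarrow> (real^'n) set" where
  "G0 E' r \<tau> = {g. \<tau> \<in> unit_box \<and> (\<exists>i. \<tau> $ i = 1 \<and> g $ i = 0 \<and>
        (\<forall>j. j \<noteq> i \<longrightarrow> g $ j \<in> reset_set E' r i j \<tau>))}"

text \<open>Outer-semicontinuous hull: the set-valued map whose graph is the closure
  of the graph of G0.\<close>
definition Gmap :: "('n \<times> 'n) set \<Rightarrow> real^'n \<Rightarrow> real^'n \<Rightarrow> (real^'n) set" where
  "Gmap E' r \<tau> = {g. (\<tau>, g) \<in> closure {(\<tau>', g'). g' \<in> G0 E' r \<tau>'}}"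

definition hybrid_time_domain :: "(real \<times> nat) set \<Rightarrow> bool" where
  "hybrid_time_domain hd_dom \<longleftrightarrow> hd_dom \<subseteq> {0..} \<times> UNIV \<and>
     (\<forall>(T, J) \<in> hd_dom. \<exists>t :: nat \<Rightarrow> real. t 0 = 0 \<and> (\<forall>j\<le>J. t j \<le> t (Suc j)) \<and>
        hd_dom \<inter> ({0..T} \<times> {..J}) = {(s, j). j \<le> J \<and> t j \<le> s \<and> s \<le> t (Suc j)})"

definition I_j :: "(real \<times> nat) set \<Rightarrow> nat \<Rightarrow> real set" where
  "I_j hd_dom j = {t. (t, j) \<in> hd_dom}"

text \<open>During flow, t \<mapsto> tau(t,j) is locally absolutely continuous with derivative
  equal to the flow map a.e., expressed in integral (Caratheodory) form, and
  lambda is constant.\<close>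
definition is_solution ::
  "real \<Rightarrow> real^'n \<Rightarrow> (nat \<Rightarrow> ('n \<times> 'n) set) \<Rightarrow> (real \<times> nat) set
     \<Rightarrow> (real \<Rightarrow> nat \<Rightarrow> (real^'n) \<times> nat) \<Rightarrow> bool" where
  "is_solution T r \<xi> hd_dom x \<longleftrightarrow>
     hybrid_time_domain hd_dom \<and> (0, 0) \<in> hd_dom \<and>
     x 0 0 \<in> closure flow_set \<union> jump_set \<and>
     (\<forall>j. interior (I_j hd_dom j) \<noteq> {} \<longrightarrow>
        (\<forall>t \<in> interior (I_j hd_dom j). x t j \<in> flow_set) \<and>
        (\<forall>s \<in> I_j hd_dom j. \<forall>t \<in> I_j hd_dom j. s \<le> t \<longrightarrow>
           (\<lambda>u. flow_map T (fst (x u j))) absolutely_integrable_on {s..t} \<and>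
           fst (x t j) = fst (x s j) + integral {s..t} (\<lambda>u. flow_map T (fst (x u j))) \<and>
           snd (x t j) = snd (x s j))) \<and>
     (\<forall>t j. (t, j) \<in> hd_dom \<and> (t, Suc j) \<in> hd_dom \<longrightarrow>
        x t j \<in> jump_set \<and>
        fst (x t (Suc j)) \<in> Gmap (\<xi> (Suc (snd (x t j)))) r (fst (x t j)) \<and>
        snd (x t (Suc j)) = Suc (snd (x t j)))"

definition complete_domain :: "(real \<times> nat) set \<Rightarrow> bool" where
  "complete_domain hd_dom \<longleftrightarrow> (\<forall>M. \<exists>(t, j) \<in> hd_dom. t + real j > M)"

definition A_s :: "(real^'n) set" where
  "A_s = {(\<chi> i. \<mu>) | \<mu>. 0 \<le> \<mu> \<and> \<mu> \<le> 1} \<union> {\<tau>. \<forall>i. \<tau> $ i \<in> {0, 1}}"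

definition A_set :: "((real^'n) \<times> nat) set" where
  "A_set = A_s \<times> UNIV"

end

theory Submission
  imports Defs
begin

lemma c1: "continuous_on UNIV (\<lambda>p::(real^'a)\<times>(real^'a). snd p $ j)"
  by (intro continuous_on_component continuous_on_snd continuous_on_id)
lemma c2: "continuous_on UNIV (\<lambda>p::(real^'a)\<times>(real^'a). fst p $ j)"
  by (intro continuous_on_component continuous_on_fst continuous_on_id)

lemma As_binary: "(\<forall>i. \<tau> $ i \<in> {0, 1}) \<Longrightarrow> \<tau> \<in> A_s"
  unfolding A_s_def by blast

lemma Gmap_binary:
  assumes "\<forall>i. \<tau> $ i \<in> {0::real, 1}" "g \<in> Gmap E' r \<tau>"
  shows "\<forall>i. g $ i \<in> {0, 1}"
proof
  fix j
  let ?S = "{p :: (real^'a) \<times> (real^'a). (snd p $ j) * (snd p $ j - 1) * (snd p $ j - fst p $ j) = 0}"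
  have cl: "closed ?S"
    by (intro closed_Collect_eq continuous_on_mult continuous_on_diff c1 c2 continuous_on_const)
  have sub: "{(\<tau>', g'). g' \<in> G0 E' r \<tau>'} \<subseteq> ?S"
  proof
    fix p assume "p \<in> {(\<tau>', g'). g' \<in> G0 E' r \<tau>'}"
    then obtain a b where p: "p = (a, b)" "b \<in> G0 E' r a" by auto
    then obtain i where i: "b $ i = 0" "\<forall>j. j \<noteq> i \<longrightarrow> b $ j \<in> reset_set E' r i j a"
      unfolding G0_def by auto
    have "b $ j \<in> {0, 1, a $ j}"
    proof (cases "j = i")
      case True then show ?thesis using i by simp
    next
      case False
      then have "b $ j \<in> reset_set E' r i j a" using i by blast
      moreover have "reset_set E' r i j a \<subseteq> {0, 1, a $ j}" unfolding reset_set_def by auto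
      ultimately show ?thesis by blast
    qed
    then show "p \<in> ?S" using p(1) by auto
  qed
  have "(\<tau>, g) \<in> ?S"
    using closure_minimal[OF sub cl] assms(2) unfolding Gmap_def by auto
  then have "g $ j \<in> {0, 1, \<tau> $ j}" by simp
  then show "g $ j \<in> {0, 1}" using assms(1) by auto
qed

lemma flow_step:
  fixes x :: "real \<Rightarrow> nat \<Rightarrow> (real^'n::finite) \<times> nat"
  assumes sol: "is_solution T r \<xi> hd_dom x" and T: "T > 0"
    and sd: "(s, j) \<in> hd_dom" and td: "(t, j) \<in> hd_dom" and st: "s < t"
    and A: "fst (x s j) \<in> A_s"
  shows "fst (x t j) \<in> A_s"
proof -
  have htd: "hybrid_time_domain hd_dom" using sol unfolding is_solution_def by auto
  then have dom0: "hd_dom \<subseteq> {0..} \<times> UNIV" unfolding hybrid_time_domain_def by auto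
  from htd td obtain tt :: "nat \<Rightarrow> real" where
    tt: "hd_dom \<inter> ({0..t} \<times> {..j}) = {(s, i). i \<le> j \<and> tt i \<le> s \<and> s \<le> tt (Suc i)}"
    unfolding hybrid_time_domain_def by blast
  have s0: "s \<ge> 0" using sd dom0 by auto
  have "(s, j) \<in> hd_dom \<inter> ({0..t} \<times> {..j})" using sd s0 st by auto
  then have h1: "tt j \<le> s" using tt by auto
  have "(t, j) \<in> hd_dom \<inter> ({0..t} \<times> {..j})" using td s0 st by auto
  then have h2: "t \<le> tt (Suc j)" using tt by auto
  have Isub: "{s..t} \<subseteq> I_j hd_dom j"
  proof
    fix u assume "u \<in> {s..t}"
    then have "(u, j) \<in> {(s, i). i \<le> j \<and> tt i \<le> s \<and> s \<le> tt (Suc i)}" using h1 h2 by auto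
    then show "u \<in> I_j hd_dom j" using tt unfolding I_j_def by blast
  qed
  have intsub: "{s<..<t} \<subseteq> interior (I_j hd_dom j)"
    by (rule interior_maximal) (use Isub in auto)
  have "(s + t) / 2 \<in> {s<..<t}" using st by auto
  then have ne: "interior (I_j hd_dom j) \<noteq> {}" using intsub by blast
  note FB = sol[unfolded is_solution_def, THEN conjunct2, THEN conjunct2, THEN conjunct2,
        THEN conjunct1, rule_format, OF ne]
  note flow = FB[THEN conjunct1]
  note eqn = FB[THEN conjunct2]
  define \<tau>0 where "\<tau>0 = fst (x s j)"
  have comp: "fst (x u j) $ i = \<tau>0 $ i + (u - s) / T" if "u \<in> {s..t}" for u i
  proof -
    have "fst (x u j) = fst (x s j) + integral {s..u} (\<lambda>u. flow_map T (fst (x u j)))"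
    proof -
      have "s \<in> I_j hd_dom j" "u \<in> I_j hd_dom j" using Isub that st by auto
      then show ?thesis using eqn[rule_format, of s u] that by simp
    qed
    also have "integral {s..u} (\<lambda>u. flow_map T (fst (x u j))) = scaleR (u - s) (\<chi> i. 1 / T)"
      using that by (simp add: flow_map_def)
    finally show ?thesis unfolding \<tau>0_def by simp
  qed
  have box: "0 \<le> fst (x u j) $ i \<and> fst (x u j) $ i \<le> 1" if "u \<in> {s<..<t}" for u i
  proof -
    have "u \<in> interior (I_j hd_dom j)" using intsub that by blast
    then have "x u j \<in> flow_set" using flow by blast
    then have "fst (x u j) \<in> unit_box" unfolding flow_set_def by (cases "x u j") auto
    then show ?thesis unfolding unit_box_def by blast
  qed
  obtain \<mu> where mu: "0 \<le> \<mu>" "\<mu> \<le> 1" "\<tau>0 = (\<chi> i. \<mu>)"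
  proof (cases "\<tau>0 \<in> {(\<chi> i. \<mu>) | \<mu>. 0 \<le> \<mu> \<and> \<mu> \<le> 1}")
    case True then show ?thesis using that by auto
  next
    case False
    then have bin: "\<forall>i. \<tau>0 $ i \<in> {0, 1}" using A unfolding A_s_def \<tau>0_def by auto
    show ?thesis
    proof (cases "\<exists>i. \<tau>0 $ i = 1")
      case True
      then obtain i where i: "\<tau>0 $ i = 1" by auto
      have m: "(s + t) / 2 \<in> {s<..<t}" using st by auto
      have "fst (x ((s + t) / 2) j) $ i = 1 + ((s + t) / 2 - s) / T"
        using comp[of "(s+t)/2" i] m i by auto
      moreover have "((s + t) / 2 - s) / T > 0" using st T by auto
      ultimately show ?thesis using box[OF m, of i] by auto
    next
      case False
      then have "\<tau>0 = (\<chi> i. 0)" using bin by (auto simp: vec_eq_iff)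
      then show ?thesis using that[of 0] by simp
    qed
  qed
  define i0 :: 'n where "i0 = undefined"
  have le: "\<mu> + (t - s) / T \<le> 1"
  proof (rule ccontr)
    assume nle: "\<not> \<mu> + (t - s) / T \<le> 1"
    define d where "d = \<mu> + (t - s) / T - 1"
    have d: "d > 0" using nle d_def by auto
    define m where "m = min ((t - s) / 2) (T * d / 2)"
    have mpos: "m > 0" using st T d by (auto simp: m_def)
    have mle: "m \<le> (t - s) / 2" "m \<le> T * d / 2" unfolding m_def by (rule min.cobounded1, rule min.cobounded2)
    have u: "t - m \<in> {s<..<t}" using mpos mle st by auto
    have "fst (x (t - m) j) $ i0 = \<mu> + (t - m - s) / T"
      using comp[of "t - m" i0] u mu by auto
    moreover have "(t - m - s) / T = (t - s) / T - m / T" by (simp add: diff_divide_distrib)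
    moreover have "m / T \<le> d / 2" using mle T by (simp add: divide_simps mult.commute)
    ultimately show False using box[OF u, of i0] d d_def by linarith
  qed
  have "fst (x t j) = (\<chi> i. \<mu> + (t - s) / T)"
    using comp[of t] st mu by (auto simp: vec_eq_iff)
  moreover have "0 \<le> \<mu> + (t - s) / T" using mu st T by auto
  ultimately have "fst (x t j) \<in> {(\<chi> i. \<mu>) | \<mu>. 0 \<le> \<mu> \<and> \<mu> \<le> 1}"
    using le by (intro CollectI exI[of _ "\<mu> + (t - s) / T"]) simp
  then show ?thesis unfolding A_s_def by (rule UnI1)
qed

theorem lemma2:
  fixes E :: "('n::finite \<times> 'n) set" and T :: real and r :: "real^'n"
    and \<xi> :: "nat \<Rightarrow> ('n \<times> 'n) set"
    and hd_dom :: "(real \<times> nat) set" and x :: "real \<Rightarrow> nat \<Rightarrow> (real^'n) \<times> nat"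
  assumes "simple_digraph E"
    and "T > 0"
    and "\<forall>i. 0 < r $ i \<and> r $ i < 1"
    and "feasible_seq E \<xi>"
    and "is_solution T r \<xi> hd_dom x"
    and "complete_domain hd_dom"
    and "fst (x 0 0) \<in> A_s"
  shows "\<forall>(t, k) \<in> hd_dom. fst (x t k) \<in> A_s \<and> x t k \<in> A_set"
proof -
  note sol = assms(5) and T = assms(2)
  have htd: "hybrid_time_domain hd_dom" and d00: "(0, 0) \<in> hd_dom"
    using sol unfolding is_solution_def by auto
  then have dom0: "hd_dom \<subseteq> {0..} \<times> UNIV" unfolding hybrid_time_domain_def by auto
  have jmp: "\<And>t j. (t, j) \<in> hd_dom \<Longrightarrow> (t, Suc j) \<in> hd_dom \<Longrightarrow>
        x t j \<in> jump_set \<and> fst (x t (Suc j)) \<in> Gmap (\<xi> (Suc (snd (x t j)))) r (fst (x t j))"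
    using sol[unfolded is_solution_def, THEN conjunct2, THEN conjunct2, THEN conjunct2,
        THEN conjunct2, rule_format] by (metis (no_types))
  have main: "\<forall>t. (t, k) \<in> hd_dom \<longrightarrow> fst (x t k) \<in> A_s" for k
  proof (induction k)
    case 0
    show ?case
    proof (intro allI impI)
      fix t assume td: "(t, 0) \<in> hd_dom"
      then have "t \<ge> 0" using dom0 by auto
      then show "fst (x t 0) \<in> A_s"
        using flow_step[OF sol T d00 td] assms(7) by (cases "t = 0") auto
    qed
  next
    case (Suc k)
    show ?case
    proof (intro allI impI)
      fix t assume td: "(t, Suc k) \<in> hd_dom"
      from htd td obtain tt :: "nat \<Rightarrow> real" where
        mono: "\<forall>j\<le>Suc k. tt j \<le> tt (Suc j)" and
        tt: "hd_dom \<inter> ({0..t} \<times> {..Suc k}) = {(s, i). i \<le> Suc k \<and> tt i \<le> s \<and> s \<le> tt (Suc i)}"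
        unfolding hybrid_time_domain_def by blast
      have t0: "t \<ge> 0" using td dom0 by auto
      have "(t, Suc k) \<in> hd_dom \<inter> ({0..t} \<times> {..Suc k})" using td t0 by auto
      then have h: "tt (Suc k) \<le> t" using tt by auto
      define s where "s = tt (Suc k)"
      have "(s, k) \<in> {(s, i). i \<le> Suc k \<and> tt i \<le> s \<and> s \<le> tt (Suc i)}"
        using mono s_def by auto
      then have sk: "(s, k) \<in> hd_dom" using tt by blast
      have "(s, Suc k) \<in> {(s, i). i \<le> Suc k \<and> tt i \<le> s \<and> s \<le> tt (Suc i)}"
        using mono s_def by auto
      then have sk1: "(s, Suc k) \<in> hd_dom" using tt by blast
      have A1: "fst (x s k) \<in> A_s" using Suc sk by auto
      have J: "x s k \<in> jump_set" and G: "fst (x s (Suc k)) \<in> Gmap (\<xi> (Suc (snd (x s k)))) r (fst (x s k))"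
        using jmp[OF sk sk1] by auto
      have bin: "\<forall>i. fst (x s k) $ i \<in> {0, 1}"
      proof (cases "fst (x s k) \<in> {(\<chi> i. \<mu>) | \<mu>. 0 \<le> \<mu> \<and> \<mu> \<le> 1}")
        case True
        then obtain \<mu> where mu: "fst (x s k) = (\<chi> i. \<mu>)" by auto
        from J obtain i where "fst (x s k) $ i = 1" unfolding jump_set_def
          by (cases "x s k") auto
        then have "\<mu> = 1" using mu by auto
        then show ?thesis using mu by auto
      next
        case False then show ?thesis using A1 unfolding A_s_def by auto
      qed
      have As1: "fst (x s (Suc k)) \<in> A_s"
        using As_binary Gmap_binary[OF bin G] by blast
      show "fst (x t (Suc k)) \<in> A_s"
      proof (cases "s = t")
        case True then show ?thesis using As1 by simp
      next
        case False
        then have "s < t" using h s_def by auto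
        then show ?thesis using flow_step[OF sol T sk1 td] As1 by auto
      qed
    qed
  qed
  show ?thesis
  proof (intro ballI)
    fix p assume "p \<in> hd_dom"
    then obtain t k where p: "p = (t, k)" "(t, k) \<in> hd_dom" by (cases p) auto
    then have "fst (x t k) \<in> A_s" using main by auto
    then show "case p of (t, k) \<Rightarrow> fst (x t k) \<in> A_s \<and> x t k \<in> A_set"
      using p unfolding A_set_def by (cases "x t k") auto
  qed
qed

end
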